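(* For every integer $n\ge 2$, $F_{2 n-1} F_{n-2}^3+F_n (F_n F_{n+2}-F_{2 n}) F_{2 n+1}= F_{n-2}\left(F_n^2 (F_{2 n-1}+F_{2 n+1})-F_{2 n-2} F_{2 n-1}\right)$, where $F_k$ denotes the $k$-th Fibonacci number.
   Context: The Fibonacci numbers are defined by $F_0=0$, $F_1=1$, $F_k=F_{k-1}+F_{k-2}$ for $k\ge 2$. *)

theory Defs
  imports "HOL-Number_Theory.Fib"
begin

end

theory Submission
  imports Defs
begin
lemma fibS: "int (fib (Suc (Suc k))) = int (fib (Suc k)) + int (fib k)" by simp

lemma A: "int (fib (2*m)) = int (fib m) * (2 * int (fib (Suc m)) - int (fib m))"
  proof (cases m)
    case 0 then show ?thesis by simp
  next
    case (Suc k)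
    have "fib (Suc k + Suc k) = fib (Suc k) * fib (Suc (Suc k)) + fib k * fib (Suc k)"
      using fib_add[of "Suc k" k] by (simp add: mult.commute)
    hence "int (fib (Suc k + Suc k)) = int (fib (Suc k)) * int (fib (Suc (Suc k))) + int (fib k) * int (fib (Suc k))"
      by (metis of_nat_add of_nat_mult)
    then show ?thesis unfolding fibS Suc mult_2 by (simp add: algebra_simps)
  qed
lemma B: "int (fib (2*m+1)) = int (fib m)^2 + int (fib (Suc m))^2"
proof -
  have "fib (m + Suc m) = fib (Suc m) * fib (Suc m) + fib m * fib m"
    using fib_add[of m m] by simp
  hence "int (fib (m + Suc m)) = int (fib (Suc m)) * int (fib (Suc m)) + int (fib m) * int( fib m)"
    by (metis of_nat_add of_nat_mult)
  then show ?thesis by (simp add: mult_2 power2_eq_square)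
qed
theorem proposition7p2:
  fixes n :: nat
  assumes "n \<ge> 2"
  shows "int (fib (2*n - 1)) * int (fib (n - 2)) ^ 3
           + int (fib n) * (int (fib n) * int (fib (n + 2)) - int (fib (2*n))) * int (fib (2*n + 1))
         = int (fib (n - 2)) * (int (fib n) ^ 2 * (int (fib (2*n - 1)) + int (fib (2*n + 1)))
           - int (fib (2*n - 2)) * int (fib (2*n - 1)))"
proof -
  obtain m where n: "n = m + 2" using assms le_Suc_ex by (metis add.commute)
  define a where "a = int (fib m)"
  define b where "b = int (fib (Suc m))"
  have f2: "int (fib (Suc (Suc m))) = a + b" using fibS[of m] by (simp add: a_def b_def)
  have f3: "int (fib (Suc (Suc (Suc m)))) = a + 2*b" using fibS[of "Suc m"] f2 by (simp add: b_def)
  have f4: "int (fib (Suc (Suc (Suc (Suc m))))) = 2*a + 3*b" using fibS[of "Suc (Suc m)"] f2 f3 by simp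
  have g0: "int (fib (2*m)) = a*(2*b-a)" using A by (simp add: a_def b_def)
  have g1: "int (fib (Suc (2*m))) = a^2+b^2" using B by (simp add: a_def b_def)
  have g2: "int (fib (Suc (Suc (2*m)))) = a*(2*b-a) + (a^2+b^2)"
    using g0 g1 fibS[of "2*m"] by simp
  have g3: "int (fib (Suc (Suc (Suc (2*m))))) = a*(2*b-a) + 2*(a^2+b^2)"
    using g1 g2 fibS[of "Suc (2*m)"] by simp
  have g4: "int (fib (Suc (Suc (Suc (Suc (2*m)))))) = 2*a*(2*b-a) + 3*(a^2+b^2)"
    using g2 g3 fibS[of "Suc (Suc (2*m))"] by simp
  have g5: "int (fib (Suc (Suc (Suc (Suc (Suc (2*m))))))) = 3*a*(2*b-a) + 5*(a^2+b^2)"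
    using g3 g4 fibS[of "Suc (Suc (Suc (2*m)))"] by simp
  have e: "2*n - 1 = Suc (Suc (Suc (2*m)))" "n - 2 = m" "2*n = Suc (Suc (Suc (Suc (2*m))))"
     "2*n+1 = Suc (Suc (Suc (Suc (Suc (2*m)))))" "2*n-2 = Suc (Suc (2*m))" "n+2 = Suc (Suc (Suc (Suc m)))"
    using n by auto
  have key: "(a*(2*b-a) + 2*(a^2+b^2)) * a ^ 3
           + (a+b) * ((a+b) * (2*a + 3*b) - (2*a*(2*b-a) + 3*(a^2+b^2))) * (3*a*(2*b-a) + 5*(a^2+b^2))
         = a * ((a+b) ^ 2 * ((a*(2*b-a) + 2*(a^2+b^2)) + (3*a*(2*b-a) + 5*(a^2+b^2)))
           - (a*(2*b-a) + (a^2+b^2)) * (a*(2*b-a) + 2*(a^2+b^2)))"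
    by (simp add: algebra_simps power2_eq_square power3_eq_cube)
  have fn: "int (fib n) = a + b" using f2 n by simp
  have h1: "int (fib (2*n - 1)) = a*(2*b-a) + 2*(a^2+b^2)" using g3 e(1) by simp
  have h2: "int (fib (n - 2)) = a" using e(2) a_def by simp
  have h3: "int (fib (2*n)) = 2*a*(2*b-a) + 3*(a^2+b^2)" using g4 e(3) by simp
  have h4: "int (fib (2*n+1)) = 3*a*(2*b-a) + 5*(a^2+b^2)" using g5 e(4) by simp
  have h5: "int (fib (2*n-2)) = a*(2*b-a) + (a^2+b^2)" using g2 e(5) by simp
  have h6: "int (fib (n+2)) = 2*a + 3*b" using f4 e(6) by simp
  show ?thesis unfolding fn h1 h2 h3 h4 h5 h6 using key by (simp only:)
qed
end
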